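(* Let $G$ be a graph and $H$ a subgraph of $G$. If $G\in$ CBU then $H\in$ CBU. More precisely, if $K_{a,b}$ is a complete bipartite graph with $V(K_{a,b})\subseteq V(G)$, and $H$ is the graph on $V(G)$ with $E(H)=E(G)\setminus E(K_{a,b})$, then if $G$ belongs to $d$-CBU, $H$ belongs to $(d+1)$-CBU.
   Context: Let $e_1,\ldots,e_d$ be the standard basis of $\mathbb{R}^d$. For $d\ge 1$, a graph belongs to $d$-CBU if one can assign to each vertex an axis-parallel box (product of $d$ closed intervals of positive length) in $\mathbb{R}^d$ such that the boxes have pairwise disjoint interiors, two distinct vertices are adjacent iff their boxes intersect, and any two intersecting boxes intersect in a $(d-1)$-dimensional box orthogonal to $e_1$. CBU is the union of the classes $d$-CBU over all $d\ge1$. *)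

theory Defs
  imports Complex_Main
begin

text \<open>Points of R^d are represented as functions nat => real whose coordinates
  with index >= d vanish; coordinate 0 corresponds to e_1.\<close>

definition Rd :: "nat \<Rightarrow> (nat \<Rightarrow> real) set" where
  "Rd d = {x. \<forall>i\<ge>d. x i = 0}"

definition cbox_d :: "nat \<Rightarrow> (nat \<Rightarrow> real) \<Rightarrow> (nat \<Rightarrow> real) \<Rightarrow> (nat \<Rightarrow> real) set" where
  "cbox_d d lo hi = {x \<in> Rd d. \<forall>i<d. lo i \<le> x i \<and> x i \<le> hi i}"

definition obox_d :: "nat \<Rightarrow> (nat \<Rightarrow> real) \<Rightarrow> (nat \<Rightarrow> real) \<Rightarrow> (nat \<Rightarrow> real) set" where
  "obox_d d lo hi = {x \<in> Rd d. \<forall>i<d. lo i < x i \<and> x i < hi i}"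

definition perp_e1_box :: "nat \<Rightarrow> (nat \<Rightarrow> real) set \<Rightarrow> bool" where
  "perp_e1_box d S \<longleftrightarrow> (\<exists>c a b. (\<forall>i\<in>{1..<d}. a i < b i) \<and>
      S = {x \<in> Rd d. x 0 = c \<and> (\<forall>i\<in>{1..<d}. a i \<le> x i \<and> x i \<le> b i)})"

definition graph :: "'a set \<Rightarrow> 'a set set \<Rightarrow> bool" where
  "graph V E \<longleftrightarrow> finite V \<and> (\<forall>e\<in>E. \<exists>u v. u \<in> V \<and> v \<in> V \<and> u \<noteq> v \<and> e = {u, v})"

definition subgraph :: "'a set \<Rightarrow> 'a set set \<Rightarrow> 'a set \<Rightarrow> 'a set set \<Rightarrow> bool" where
  "subgraph VH EH VG EG \<longleftrightarrow> graph VH EH \<and> VH \<subseteq> VG \<and> EH \<subseteq> EG"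

definition dCBU :: "nat \<Rightarrow> 'a set \<Rightarrow> 'a set set \<Rightarrow> bool" where
  "dCBU d V E \<longleftrightarrow> d \<ge> 1 \<and> (\<exists>lo hi :: 'a \<Rightarrow> nat \<Rightarrow> real.
     (\<forall>v\<in>V. \<forall>i<d. lo v i < hi v i) \<and>
     (\<forall>u\<in>V. \<forall>v\<in>V. u \<noteq> v \<longrightarrow> obox_d d (lo u) (hi u) \<inter> obox_d d (lo v) (hi v) = {}) \<and>
     (\<forall>u\<in>V. \<forall>v\<in>V. u \<noteq> v \<longrightarrow>
        ({u, v} \<in> E \<longleftrightarrow> cbox_d d (lo u) (hi u) \<inter> cbox_d d (lo v) (hi v) \<noteq> {})) \<and>
     (\<forall>u\<in>V. \<forall>v\<in>V. u \<noteq> v \<longrightarrow> cbox_d d (lo u) (hi u) \<inter> cbox_d d (lo v) (hi v) \<noteq> {} \<longrightarrow>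
        perp_e1_box d (cbox_d d (lo u) (hi u) \<inter> cbox_d d (lo v) (hi v))))"

definition CBU :: "'a set \<Rightarrow> 'a set set \<Rightarrow> bool" where
  "CBU V E \<longleftrightarrow> (\<exists>d\<ge>1. dCBU d V E)"

definition complete_bipartite_edges :: "'a set \<Rightarrow> 'a set \<Rightarrow> 'a set set" where
  "complete_bipartite_edges A B = {{a, b} | a b. a \<in> A \<and> b \<in> B}"

end

theory Submission imports Defs begin

lemma Rd_Suc: "x \<in> Rd (Suc d) \<longleftrightarrow> x(d:=0) \<in> Rd d"
  unfolding Rd_def by (auto simp: Suc_le_eq)

lemma cbox_Suc: "x \<in> cbox_d (Suc d) lo hi \<longleftrightarrow> x(d:=0) \<in> cbox_d d lo hi \<and> lo d \<le> x d \<and> x d \<le> hi d"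
  unfolding cbox_d_def Rd_Suc by (auto simp: less_Suc_eq)

lemma obox_Suc: "x \<in> obox_d (Suc d) lo hi \<longleftrightarrow> x(d:=0) \<in> obox_d d lo hi \<and> lo d < x d \<and> x d < hi d"
  unfolding obox_d_def Rd_Suc by (auto simp: less_Suc_eq)

lemma cbox_upd: "cbox_d d (f(d:=a)) (g(d:=b)) = cbox_d d f g"
  unfolding cbox_d_def by auto

lemma obox_upd: "obox_d d (f(d:=a)) (g(d:=b)) = obox_d d f g"
  unfolding obox_d_def by auto

lemma Rd_upd0: "y \<in> Rd d \<Longrightarrow> y(d:=0) = y"
  unfolding Rd_def by auto

lemma inter_Suc: "cbox_d (Suc d) la ha \<inter> cbox_d (Suc d) lb hb =
   {x. x(d:=0) \<in> cbox_d d la ha \<inter> cbox_d d lb hb \<and> max (la d) (lb d) \<le> x d \<and> x d \<le> min (ha d) (hb d)}"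
  by (auto simp: cbox_Suc)

lemma inter_Suc_ne:
  assumes "max (la d) (lb d) \<le> min (ha d) (hb d)"
  shows "cbox_d (Suc d) la ha \<inter> cbox_d (Suc d) lb hb \<noteq> {} \<longleftrightarrow> cbox_d d la ha \<inter> cbox_d d lb hb \<noteq> {}"
proof
  assume "cbox_d (Suc d) la ha \<inter> cbox_d (Suc d) lb hb \<noteq> {}"
  then show "cbox_d d la ha \<inter> cbox_d d lb hb \<noteq> {}" unfolding inter_Suc by blast
next
  assume "cbox_d d la ha \<inter> cbox_d d lb hb \<noteq> {}"
  then obtain y where y: "y \<in> cbox_d d la ha \<inter> cbox_d d lb hb" by blast
  then have "y \<in> Rd d" unfolding cbox_d_def by auto
  then have "y(d := max (la d) (lb d)) \<in> cbox_d (Suc d) la ha \<inter> cbox_d (Suc d) lb hb"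
    unfolding inter_Suc using y assms by (simp add: Rd_upd0)
  then show "cbox_d (Suc d) la ha \<inter> cbox_d (Suc d) lb hb \<noteq> {}" by blast
qed

lemma inter_Suc_empty:
  assumes "max (la d) (lb d) > min (ha d) (hb d)"
  shows "cbox_d (Suc d) la ha \<inter> cbox_d (Suc d) lb hb = {}"
  unfolding inter_Suc using assms by auto

lemma perp_Suc:
  assumes "d \<ge> 1" "perp_e1_box d S" "p < q"
  shows "perp_e1_box (Suc d) {x. x(d:=0) \<in> S \<and> p \<le> x d \<and> x d \<le> q}"
proof -
  obtain c a b where ab: "\<forall>i\<in>{1..<d}. a i < b i" and
    S: "S = {x \<in> Rd d. x 0 = c \<and> (\<forall>i\<in>{1..<d}. a i \<le> x i \<and> x i \<le> b i)}"
    using assms(2) unfolding perp_e1_box_def by blast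
  have d0: "d \<noteq> 0" using assms(1) by auto
  show ?thesis unfolding perp_e1_box_def
  proof (intro exI conjI)
    show "\<forall>i\<in>{1..<Suc d}. (a(d:=p)) i < (b(d:=q)) i" using ab assms(3) by (auto simp: less_Suc_eq)
    show "{x. x(d:=0) \<in> S \<and> p \<le> x d \<and> x d \<le> q} = {x \<in> Rd (Suc d). x 0 = c \<and> (\<forall>i\<in>{1..<Suc d}. (a(d:=p)) i \<le> x i \<and> x i \<le> (b(d:=q)) i)}"
      unfolding S Rd_Suc using d0 by (auto simp: less_Suc_eq)
  qed
qed


lemma cbe_pair:
  assumes "A \<inter> B = {}" "u \<noteq> v"
  shows "{u, v} \<in> complete_bipartite_edges A B \<longleftrightarrow> (u \<in> A \<and> v \<in> B) \<or> (u \<in> B \<and> v \<in> A)"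
  unfolding complete_bipartite_edges_def using assms by (auto simp: doubleton_eq_iff)

lemma part2:
  assumes AB: "A \<inter> B = {}" and G: "dCBU d V E"
  shows "dCBU (d + 1) V (E - complete_bipartite_edges A B)"
proof -
  obtain lo hi :: "'a \<Rightarrow> nat \<Rightarrow> real" where
    d1: "d \<ge> 1" and
    h1: "\<forall>v\<in>V. \<forall>i<d. lo v i < hi v i" and
    h2: "\<forall>u\<in>V. \<forall>v\<in>V. u \<noteq> v \<longrightarrow> obox_d d (lo u) (hi u) \<inter> obox_d d (lo v) (hi v) = {}" and
    h3: "\<forall>u\<in>V. \<forall>v\<in>V. u \<noteq> v \<longrightarrow>
        ({u, v} \<in> E \<longleftrightarrow> cbox_d d (lo u) (hi u) \<inter> cbox_d d (lo v) (hi v) \<noteq> {})" and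
    h4: "\<forall>u\<in>V. \<forall>v\<in>V. u \<noteq> v \<longrightarrow> cbox_d d (lo u) (hi u) \<inter> cbox_d d (lo v) (hi v) \<noteq> {} \<longrightarrow>
        perp_e1_box d (cbox_d d (lo u) (hi u) \<inter> cbox_d d (lo v) (hi v))"
    using G unfolding dCBU_def by (elim conjE exE) (rule that; assumption)
  define lo' where "lo' v = (lo v)(d := (if v \<in> B then 2 else 0 :: real))" for v
  define hi' where "hi' v = (hi v)(d := (if v \<in> A then 1 else 3 :: real))" for v
  have cb: "cbox_d d (lo' v) (hi' v) = cbox_d d (lo v) (hi v)" for v
    unfolding lo'_def hi'_def by (rule cbox_upd)
  have ob: "obox_d d (lo' v) (hi' v) = obox_d d (lo v) (hi v)" for v
    unfolding lo'_def hi'_def by (rule obox_upd)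
  have ld: "lo' v d = (if v \<in> B then 2 else 0)" "hi' v d = (if v \<in> A then 1 else 3)" for v
    unfolding lo'_def hi'_def by auto
  have dj: "x \<in> A \<Longrightarrow> x \<notin> B" for x using AB by blast
  have K: "max (lo' u d) (lo' v d) > min (hi' u d) (hi' v d)"
    if "{u, v} \<in> complete_bipartite_edges A B" "u \<noteq> v" for u v
  proof -
    have "(u \<in> A \<and> v \<in> B) \<or> (u \<in> B \<and> v \<in> A)" using cbe_pair[OF AB that(2)] that(1) by blast
    then show ?thesis
    proof
      assume "u \<in> A \<and> v \<in> B" then show ?thesis using dj[of u] dj[of v] unfolding ld by simp
    next
      assume "u \<in> B \<and> v \<in> A" then show ?thesis using dj[of u] dj[of v] unfolding ld by simp
    qed
  qed
  have NK: "max (lo' u d) (lo' v d) < min (hi' u d) (hi' v d)"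
    if "{u, v} \<notin> complete_bipartite_edges A B" "u \<noteq> v" for u v
  proof -
    have n: "\<not> ((u \<in> A \<and> v \<in> B) \<or> (u \<in> B \<and> v \<in> A))" using cbe_pair[OF AB that(2)] that(1) by blast
    show ?thesis
      apply (cases "u \<in> A"; cases "u \<in> B"; cases "v \<in> A"; cases "v \<in> B")
      using n dj[of u] dj[of v] unfolding ld by simp_all
  qed
  show ?thesis unfolding dCBU_def Suc_eq_plus1[symmetric]
    apply (rule conjI, simp)
    apply (rule exI[where x=lo'], rule exI[where x=hi'])
  proof (intro conjI ballI allI impI)
    fix v i assume "v \<in> V" "i < Suc d"
    show "lo' v i < hi' v i"
    proof (cases "i = d")
      case True then show ?thesis using dj[of v] by (simp add: ld)
    next
      case False then have "i < d" using \<open>i < Suc d\<close> by simp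
      then show ?thesis using h1 \<open>v \<in> V\<close> False unfolding lo'_def hi'_def by simp
    qed
  next
    fix u v assume uv: "u \<in> V" "v \<in> V" "u \<noteq> v"
    show "obox_d (Suc d) (lo' u) (hi' u) \<inter> obox_d (Suc d) (lo' v) (hi' v) = {}"
    proof (rule equals0I)
      fix x assume "x \<in> obox_d (Suc d) (lo' u) (hi' u) \<inter> obox_d (Suc d) (lo' v) (hi' v)"
      then have "x(d:=0) \<in> obox_d d (lo u) (hi u) \<inter> obox_d d (lo v) (hi v)"
        unfolding Int_iff obox_Suc ob by blast
      then show False using h2 uv by blast
    qed
  next
    fix u v assume uv: "u \<in> V" "v \<in> V" "u \<noteq> v"
    show "{u, v} \<in> E - complete_bipartite_edges A B \<longleftrightarrow>
      cbox_d (Suc d) (lo' u) (hi' u) \<inter> cbox_d (Suc d) (lo' v) (hi' v) \<noteq> {}"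
    proof (cases "{u, v} \<in> complete_bipartite_edges A B")
      case True
      then show ?thesis using inter_Suc_empty[where la="lo' u" and lb="lo' v" and ha="hi' u" and hb="hi' v", OF K[OF True uv(3)]] by simp
    next
      case False
      have le: "max (lo' u d) (lo' v d) \<le> min (hi' u d) (hi' v d)" using NK[OF False uv(3)] by linarith
      have "{u, v} \<in> E - complete_bipartite_edges A B \<longleftrightarrow> {u, v} \<in> E" using False by blast
      also have "\<dots> \<longleftrightarrow> cbox_d d (lo u) (hi u) \<inter> cbox_d d (lo v) (hi v) \<noteq> {}" using h3 uv by blast
      also have "\<dots> \<longleftrightarrow> cbox_d (Suc d) (lo' u) (hi' u) \<inter> cbox_d (Suc d) (lo' v) (hi' v) \<noteq> {}"
        using inter_Suc_ne[where la="lo' u" and lb="lo' v" and ha="hi' u" and hb="hi' v", OF le] unfolding cb by simp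
      finally show ?thesis .
    qed
  next
    fix u v assume uv: "u \<in> V" "v \<in> V" "u \<noteq> v"
      and ne: "cbox_d (Suc d) (lo' u) (hi' u) \<inter> cbox_d (Suc d) (lo' v) (hi' v) \<noteq> {}"
    have nK: "{u, v} \<notin> complete_bipartite_edges A B"
      using ne uv(3) K[of u v] inter_Suc_empty[where la="lo' u" and lb="lo' v" and ha="hi' u" and hb="hi' v"] by blast
    have le: "max (lo' u d) (lo' v d) \<le> min (hi' u d) (hi' v d)" using NK[OF nK uv(3)] by linarith
    have "cbox_d d (lo u) (hi u) \<inter> cbox_d d (lo v) (hi v) \<noteq> {}"
      using inter_Suc_ne[where la="lo' u" and lb="lo' v" and ha="hi' u" and hb="hi' v", OF le] ne unfolding cb by simp
    then have P: "perp_e1_box d (cbox_d d (lo u) (hi u) \<inter> cbox_d d (lo v) (hi v))" using h4 uv by blast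
    show "perp_e1_box (Suc d) (cbox_d (Suc d) (lo' u) (hi' u) \<inter> cbox_d (Suc d) (lo' v) (hi' v))"
      unfolding inter_Suc cb using perp_Suc[OF d1 P NK[OF nK uv(3)]] by simp
  qed
qed

lemma del_edges:
  assumes "finite F" "F \<subseteq> E" "\<forall>e\<in>E. \<exists>u v. u \<in> V \<and> v \<in> V \<and> u \<noteq> v \<and> e = {u, v}" "dCBU d V E"
  shows "dCBU (d + card F) V (E - F)"
  using assms(1,2)
proof (induction F rule: finite_induct)
  case empty then show ?case using assms(4) by simp
next
  case (insert e F)
  have eE: "e \<in> E" using insert.prems by blast
  have FE: "F \<subseteq> E" using insert.prems by blast
  obtain u v where uv: "u \<in> V" "v \<in> V" "u \<noteq> v" "e = {u, v}" using assms(3) eE by blast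
  have IH: "dCBU (d + card F) V (E - F)" using insert.IH[OF FE] .
  have uvd: "{u} \<inter> {v} = {}" using uv(3) by simp
  have P: "dCBU (d + card F + 1) V (E - F - complete_bipartite_edges {u} {v})"
    by (rule part2[OF uvd IH])
  have C: "complete_bipartite_edges {u} {v} = {e}" unfolding complete_bipartite_edges_def uv(4) by blast
  have c1: "card (insert e F) = card F + 1" using insert.hyps by simp
  have c2: "E - insert e F = E - F - {e}" by blast
  show ?case using P unfolding C c1 c2 by (simp only: add.assoc)
qed

lemma restrict_V:
  assumes "dCBU d V E" "W \<subseteq> V" shows "dCBU d W E"
proof -
  obtain lo hi :: "'a \<Rightarrow> nat \<Rightarrow> real" where
    d1: "d \<ge> 1" and
    h1: "\<forall>v\<in>V. \<forall>i<d. lo v i < hi v i" and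
    h2: "\<forall>u\<in>V. \<forall>v\<in>V. u \<noteq> v \<longrightarrow> obox_d d (lo u) (hi u) \<inter> obox_d d (lo v) (hi v) = {}" and
    h3: "\<forall>u\<in>V. \<forall>v\<in>V. u \<noteq> v \<longrightarrow>
        ({u, v} \<in> E \<longleftrightarrow> cbox_d d (lo u) (hi u) \<inter> cbox_d d (lo v) (hi v) \<noteq> {})" and
    h4: "\<forall>u\<in>V. \<forall>v\<in>V. u \<noteq> v \<longrightarrow> cbox_d d (lo u) (hi u) \<inter> cbox_d d (lo v) (hi v) \<noteq> {} \<longrightarrow>
        perp_e1_box d (cbox_d d (lo u) (hi u) \<inter> cbox_d d (lo v) (hi v))"
    using assms(1) unfolding dCBU_def by (elim conjE exE) (rule that; assumption)
  show ?thesis unfolding dCBU_def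
    apply (rule conjI, rule d1)
    apply (rule exI[where x=lo])
    apply (rule exI[where x=hi])
    apply (intro conjI)
    using h1 assms(2) apply blast
    using h2 assms(2) apply blast
    using h3 assms(2) apply blast
    using h4 assms(2) apply blast
    done
qed

theorem mainTheorem9:
  fixes V :: "'a set" and E :: "'a set set"
  assumes "graph V E"
  shows "(\<forall>VH EH. subgraph VH EH V E \<longrightarrow> CBU V E \<longrightarrow> CBU VH EH) \<and>
         (\<forall>A B d. A \<subseteq> V \<and> B \<subseteq> V \<and> A \<inter> B = {} \<longrightarrow> dCBU d V E \<longrightarrow>
             dCBU (d + 1) V (E - complete_bipartite_edges A B))"
proof (intro conjI allI impI)
  fix A B d assume "A \<subseteq> V \<and> B \<subseteq> V \<and> A \<inter> B = {}" "dCBU d V E"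
  then show "dCBU (d + 1) V (E - complete_bipartite_edges A B)" using part2 by blast
next
  fix VH EH assume sub: "subgraph VH EH V E" and c: "CBU V E"
  obtain d where d: "d \<ge> 1" "dCBU d V E" using c unfolding CBU_def by (elim exE conjE)
  have gV: "finite V \<and> (\<forall>e\<in>E. \<exists>u v. u \<in> V \<and> v \<in> V \<and> u \<noteq> v \<and> e = {u, v})"
    using assms unfolding graph_def .
  have fV: "finite V" using gV by (rule conjunct1)
  have ed: "\<forall>e\<in>E. \<exists>u v. u \<in> V \<and> v \<in> V \<and> u \<noteq> v \<and> e = {u, v}" using gV by (rule conjunct2)
  have "E \<subseteq> Pow V"
  proof
    fix e assume "e \<in> E"
    then obtain u v where "u \<in> V" "v \<in> V" "e = {u, v}" using ed by blast
    then show "e \<in> Pow V" by simp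
  qed
  then have fE: "finite E" using fV by (meson finite_Pow_iff finite_subset)
  have fD: "finite (E - EH)" using fE by simp
  have sD: "E - EH \<subseteq> E" by blast
  have 1: "dCBU (d + card (E - EH)) V (E - (E - EH))"
    by (rule del_edges[OF fD sD ed d(2)])
  have 2: "E - (E - EH) = EH" using sub unfolding subgraph_def by blast
  have 3: "VH \<subseteq> V" using sub unfolding subgraph_def by blast
  have X: "dCBU (d + card (E - EH)) VH EH" using restrict_V[OF 1 3] unfolding 2 .
  have Y: "d + card (E - EH) \<ge> 1" using d(1) by simp
  from Y X have "d + card (E - EH) \<ge> 1 \<and> dCBU (d + card (E - EH)) VH EH" by (rule conjI)
  then show "CBU VH EH" unfolding CBU_def by (rule exI)
qed

end
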